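(* Let $G_{\mathit{di}}$ be a knowledge connectivity graph that is Byzantine-safe for $F$ and whose sink component (vertex set $V_{\mathit{sink}}$) contains at least $2f+1$ correct processes. Then participant detectors, the threshold $f$, and the sink detector are sufficient to solve consensus in Stellar: when every process defines its slices by the slice construction below (using $\mathit{PD}_i$, $f$, and the sink detector), the set $W$ of all correct processes forms a consensus cluster, and hence is the (unique) maximal consensus cluster.
   Context: Processes and faults: $\Pi$ is a finite set of processes, $f\ge0$ a known integer; $W\subseteq\Pi$ is the set of correct processes and $F=\Pi\setminus W$ the Byzantine faulty processes, $|F|\le f$. Faulty processes may declare arbitrary slices. Slices and quorums: each process $i$ has a set $\mathcal{S}_i$ of slices (subsets of $\Pi$). $Q\subseteq\Pi$ is a quorum if every $i\in Q$ has some $S\in\mathcal{S}_i$ with $S\subseteq Q$; a quorum of $i$ is a quorum containing $i$. A set $I\subseteq W$ is intertwined if $|Q\cap Q'|>f$ for all $i,j\in I$, every quorum $Q$ of $i$ and every quorum $Q'$ of $j$. A set $I\subseteq W$ is a consensus cluster if (Quorum Intersection) $I$ is intertwined and (Quorum Availability) every $i\in I$ has a quorum $Q$ with $Q\subseteq I$. A maximal consensus cluster is a consensus cluster not strictly contained in another consensus cluster. (Known criterion, from prior work: all correct processes can solve consensus with the Stellar consensus protocol under partial synchrony if there is exactly one maximal consensus cluster and it equals $W$.) Knowledge graph: each process $i$ is given $\mathit{PD}_i\subseteq\Pi$; $G_{\mathit{di}}$ is the directed graph on $\Pi$ with edge $(i,j)$ iff $j\in\mathit{PD}_i$. A sink component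 is a strongly connected component of $G_{\mathit{di}}$ from which no path leads outside it. A directed graph is $k$-OSR if (1) its underlying undirected graph is connected; (2) its condensation into strongly connected components has exactly one sink $G_{\mathit{sink}}$; (3) $G_{\mathit{sink}}$ is $k$-strongly connected (every ordered pair of its nodes joined by $k$ node-disjoint directed paths); (4) from every node outside $G_{\mathit{sink}}$ to every node in it there are at least $k$ node-disjoint directed paths. $G_{\mathit{di}}$ is Byzantine-safe for $F$ if $|F|\le f$ and the graph obtained from $G_{\mathit{di}}$ by deleting $F$ is $(f+1)$-OSR. $V_{\mathit{sink}}$ denotes the vertex set of the unique sink component of $G_{\mathit{di}}$. Sink detector: an oracle with operation $\mathtt{get\_sink}(\mathit{PD}_i,f)$ returning $\langle \mathit{true},V_{\mathit{sink}}\rangle$ to $i\in V_{\mathit{sink}}$ and $\langle\mathit{false},V_i\rangle$ to $i\notin V_{\mathit{sink}}$, where $V_i\subseteq V_{\mathit{sink}}$ contains at least $f+1$ correct members of $V_{\mathit{sink}}$. Slice construction: let $m=\lceil (|V_{\mathit{sink}}|+f+1)/2\rceil$. Every correct $i\in V_{\mathit{sink}}$ has $\mathcal{S}_i=\{S\subseteq V_{\mathit{sink}}: |S|=m\}$; every correct $i\notin V_{\mathit{sink}}$ has $\mathcal{S}_i=\{S\subseteq V_i: |S|=f+1\}$. *)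

theory Defs
  imports Complex_Main
begin

text \<open>Sl i is the set of slices declared by process i.\<close>

definition is_quorum :: "'p set \<Rightarrow> ('p \<Rightarrow> 'p set set) \<Rightarrow> 'p set \<Rightarrow> bool" where
  "is_quorum Pi Sl Q \<longleftrightarrow> Q \<subseteq> Pi \<and> (\<forall>i\<in>Q. \<exists>S\<in>Sl i. S \<subseteq> Q)"

definition intertwined :: "'p set \<Rightarrow> ('p \<Rightarrow> 'p set set) \<Rightarrow> 'p set \<Rightarrow> nat \<Rightarrow> 'p set \<Rightarrow> bool" where
  "intertwined Pi Sl W f I \<longleftrightarrow> I \<subseteq> W \<and>
     (\<forall>i\<in>I. \<forall>j\<in>I. \<forall>Q Q'. is_quorum Pi Sl Q \<and> i \<in> Q \<and> is_quorum Pi Sl Q' \<and> j \<in> Q'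
        \<longrightarrow> card (Q \<inter> Q') > f)"

definition consensus_cluster :: "'p set \<Rightarrow> ('p \<Rightarrow> 'p set set) \<Rightarrow> 'p set \<Rightarrow> nat \<Rightarrow> 'p set \<Rightarrow> bool" where
  "consensus_cluster Pi Sl W f I \<longleftrightarrow> intertwined Pi Sl W f I \<and>
     (\<forall>i\<in>I. \<exists>Q. is_quorum Pi Sl Q \<and> i \<in> Q \<and> Q \<subseteq> I)"

definition maximal_consensus_cluster :: "'p set \<Rightarrow> ('p \<Rightarrow> 'p set set) \<Rightarrow> 'p set \<Rightarrow> nat \<Rightarrow> 'p set \<Rightarrow> bool" where
  "maximal_consensus_cluster Pi Sl W f I \<longleftrightarrow> consensus_cluster Pi Sl W f I \<and>
     (\<forall>J. consensus_cluster Pi Sl W f J \<and> I \<subseteq> J \<longrightarrow> J = I)"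

definition reach :: "'p set \<Rightarrow> ('p \<times> 'p) set \<Rightarrow> ('p \<times> 'p) set" where
  "reach V E = (E \<inter> (V \<times> V))\<^sup>*"

definition strongly_connected_component :: "'p set \<Rightarrow> ('p \<times> 'p) set \<Rightarrow> 'p set \<Rightarrow> bool" where
  "strongly_connected_component V E C \<longleftrightarrow> C \<noteq> {} \<and> C \<subseteq> V \<and>
     (\<forall>x\<in>C. \<forall>y\<in>C. (x, y) \<in> reach V E) \<and>
     (\<forall>x\<in>C. \<forall>y\<in>V. (x, y) \<in> reach V E \<and> (y, x) \<in> reach V E \<longrightarrow> y \<in> C)"

definition sink_component :: "'p set \<Rightarrow> ('p \<times> 'p) set \<Rightarrow> 'p set \<Rightarrow> bool" where
  "sink_component V E C \<longleftrightarrow> strongly_connected_component V E C \<and>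
     (\<forall>x\<in>C. \<forall>y\<in>V. (x, y) \<in> reach V E \<longrightarrow> y \<in> C)"

definition weakly_connected :: "'p set \<Rightarrow> ('p \<times> 'p) set \<Rightarrow> bool" where
  "weakly_connected V E \<longleftrightarrow>
     (\<forall>x\<in>V. \<forall>y\<in>V. (x, y) \<in> ((E \<union> E\<inverse>) \<inter> (V \<times> V))\<^sup>*)"

definition dpath :: "'p set \<Rightarrow> ('p \<times> 'p) set \<Rightarrow> 'p \<Rightarrow> 'p \<Rightarrow> 'p list \<Rightarrow> bool" where
  "dpath V E u v p \<longleftrightarrow> p \<noteq> [] \<and> hd p = u \<and> last p = v \<and> set p \<subseteq> V \<and> distinct p \<and>
     (\<forall>k. Suc k < length p \<longrightarrow> (p ! k, p ! Suc k) \<in> E)"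

definition inner_vertices :: "'p list \<Rightarrow> 'p set" where
  "inner_vertices p = set (butlast (tl p))"

definition k_disjoint_paths :: "'p set \<Rightarrow> ('p \<times> 'p) set \<Rightarrow> nat \<Rightarrow> 'p \<Rightarrow> 'p \<Rightarrow> bool" where
  "k_disjoint_paths V E k u v \<longleftrightarrow> (\<exists>P. finite P \<and> card P \<ge> k \<and> (\<forall>p\<in>P. dpath V E u v p) \<and>
     (\<forall>p\<in>P. \<forall>q\<in>P. p \<noteq> q \<longrightarrow> inner_vertices p \<inter> inner_vertices q = {}))"

definition k_strongly_connected :: "'p set \<Rightarrow> ('p \<times> 'p) set \<Rightarrow> nat \<Rightarrow> bool" where
  "k_strongly_connected V E k \<longleftrightarrow> (\<forall>u\<in>V. \<forall>v\<in>V. u \<noteq> v \<longrightarrow> k_disjoint_paths V E k u v)"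

definition k_OSR :: "'p set \<Rightarrow> ('p \<times> 'p) set \<Rightarrow> nat \<Rightarrow> bool" where
  "k_OSR V E k \<longleftrightarrow> weakly_connected V E \<and>
     (\<exists>C. sink_component V E C \<and> (\<forall>C'. sink_component V E C' \<longrightarrow> C' = C) \<and>
          k_strongly_connected C E k \<and>
          (\<forall>u\<in>V - C. \<forall>v\<in>C. k_disjoint_paths V E k u v))"

definition kgraph_edges :: "'p set \<Rightarrow> ('p \<Rightarrow> 'p set) \<Rightarrow> ('p \<times> 'p) set" where
  "kgraph_edges Pi PD = {(i, j). i \<in> Pi \<and> j \<in> Pi \<and> j \<in> PD i}"

definition byzantine_safe :: "'p set \<Rightarrow> ('p \<Rightarrow> 'p set) \<Rightarrow> nat \<Rightarrow> 'p set \<Rightarrow> bool" where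
  "byzantine_safe Pi PD f F \<longleftrightarrow> card F \<le> f \<and>
     k_OSR (Pi - F) (kgraph_edges Pi PD \<inter> ((Pi - F) \<times> (Pi - F))) (f + 1)"

text \<open>sd i is the output of get_sink(PD_i, f) at process i.\<close>
definition sink_detector_spec :: "'p set \<Rightarrow> nat \<Rightarrow> 'p set \<Rightarrow> ('p \<Rightarrow> bool \<times> 'p set) \<Rightarrow> bool" where
  "sink_detector_spec W f Vsink sd \<longleftrightarrow>
     (\<forall>i\<in>W. (i \<in> Vsink \<longrightarrow> sd i = (True, Vsink)) \<and>
            (i \<notin> Vsink \<longrightarrow> fst (sd i) = False \<and> snd (sd i) \<subseteq> Vsink \<and>
                              card (snd (sd i) \<inter> Vsink \<inter> W) \<ge> f + 1))"

definition slice_threshold :: "'p set \<Rightarrow> nat \<Rightarrow> nat" where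
  "slice_threshold Vsink f = nat \<lceil>real (card Vsink + f + 1) / 2\<rceil>"

definition constructed_slices :: "nat \<Rightarrow> 'p set \<Rightarrow> bool \<times> 'p set \<Rightarrow> 'p set set" where
  "constructed_slices f Vsink r =
     (if fst r then {S. S \<subseteq> Vsink \<and> card S = slice_threshold Vsink f}
      else {S. S \<subseteq> snd r \<and> card S = f + 1})"

end

theory Submission
  imports Defs
begin

lemma thr: "slice_threshold V f = (card V + f + 2) div 2"
proof -
  have "\<lceil>real (card V + f + 1) / 2\<rceil> = int ((card V + f + 2) div 2)"
  proof (rule ceiling_unique)
    show "real_of_int (int ((card V + f + 2) div 2)) - 1 < real (card V + f + 1) / 2"
      by (simp add: field_simps)
    show "real (card V + f + 1) / 2 \<le> real_of_int (int ((card V + f + 2) div 2))"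
      by (simp add: field_simps)
  qed
  then show ?thesis unfolding slice_threshold_def by simp
qed

theorem theorem5:
  fixes Pi W :: "'p set" and f :: nat and PD :: "'p \<Rightarrow> 'p set"
    and Vsink :: "'p set" and sd :: "'p \<Rightarrow> bool \<times> 'p set" and Sl :: "'p \<Rightarrow> 'p set set"
  assumes "finite Pi"
    and "W \<subseteq> Pi"
    and "card (Pi - W) \<le> f"
    and "byzantine_safe Pi PD f (Pi - W)"
    and "sink_component Pi (kgraph_edges Pi PD) Vsink"
    and "\<forall>C. sink_component Pi (kgraph_edges Pi PD) C \<longrightarrow> C = Vsink"
    and "card (Vsink \<inter> W) \<ge> 2 * f + 1"
    and "sink_detector_spec W f Vsink sd"
    and "\<forall>i\<in>W. Sl i = constructed_slices f Vsink (sd i)"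
  shows "consensus_cluster Pi Sl W f W \<and>
         (\<forall>I. maximal_consensus_cluster Pi Sl W f I \<longleftrightarrow> I = W)"
proof -
  note fin = assms(1) and WP = assms(2) and bad = assms(3) and sdspec = assms(8)[unfolded sink_detector_spec_def]
    and slices = assms(9)
  define m where "m = slice_threshold Vsink f"
  have VP: "Vsink \<subseteq> Pi" using assms(5) unfolding sink_component_def strongly_connected_component_def by blast
  have finV: "finite Vsink" using VP fin finite_subset by blast
  have finW: "finite W" using WP fin finite_subset by blast
  have m_eq: "m = (card Vsink + f + 2) div 2" unfolding m_def by (rule thr)
  have "card (Vsink - W) \<le> card (Pi - W)" using VP fin by (intro card_mono) auto
  moreover have "card Vsink = card (Vsink \<inter> W) + card (Vsink - W)"
    using finV by (metis Diff_Diff_Int Int_commute card_Diff_subset_Int card_Int_Diff finite_Int)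
  ultimately have m_le: "m \<le> card (Vsink \<inter> W)" using m_eq assms(7) bad by linarith
  have m2: "2 * m \<ge> card Vsink + f + 1" using m_eq by linarith
  have Sl_in: "Sl i = {S. S \<subseteq> Vsink \<and> card S = m}" if "i \<in> W" "i \<in> Vsink" for i
    using sdspec slices that unfolding constructed_slices_def m_def by auto
  have Sl_out: "Sl i = {S. S \<subseteq> snd (sd i) \<and> card S = f + 1}" "snd (sd i) \<subseteq> Vsink"
    "card (snd (sd i) \<inter> Vsink \<inter> W) \<ge> f + 1"
    if "i \<in> W" "i \<notin> Vsink" for i
    using sdspec slices that unfolding constructed_slices_def by auto
  have core: "\<exists>S. S \<subseteq> Q \<and> S \<subseteq> Vsink \<and> card S = m"
    if Q: "is_quorum Pi Sl Q" "i \<in> Q" "i \<in> W" for Q i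
  proof (cases "i \<in> Vsink")
    case True
    then obtain S where "S \<in> Sl i" "S \<subseteq> Q" using Q unfolding is_quorum_def by blast
    then show ?thesis using Sl_in[OF Q(3) True] by auto
  next
    case False
    then obtain S where S: "S \<in> Sl i" "S \<subseteq> Q" using Q unfolding is_quorum_def by blast
    have QP: "Q \<subseteq> Pi" using Q unfolding is_quorum_def by blast
    have S1: "S \<subseteq> Vsink" "card S = f + 1" using S Sl_out[OF Q(3) False] by auto
    have "S \<inter> W \<noteq> {}"
    proof
      assume "S \<inter> W = {}"
      then have "S \<subseteq> Pi - W" using S QP by blast
      then have "card S \<le> card (Pi - W)" using fin by (intro card_mono) auto
      then show False using S1 bad by linarith
    qed
    then obtain k where k: "k \<in> S" "k \<in> W" by blast
    then have kV: "k \<in> Vsink" "k \<in> Q" using S1 S by auto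
    then obtain T where "T \<in> Sl k" "T \<subseteq> Q" using Q unfolding is_quorum_def by blast
    then show ?thesis using Sl_in[OF k(2) kV(1)] by auto
  qed
  have inter: "intertwined Pi Sl W f W"
    unfolding intertwined_def
  proof (intro conjI ballI allI impI)
    fix i j Q Q'
    assume i: "i \<in> W" and j: "j \<in> W" and H: "is_quorum Pi Sl Q \<and> i \<in> Q \<and> is_quorum Pi Sl Q' \<and> j \<in> Q'"
    obtain S where S: "S \<subseteq> Q" "S \<subseteq> Vsink" "card S = m" using core H i by blast
    obtain T where T: "T \<subseteq> Q'" "T \<subseteq> Vsink" "card T = m" using core H j by blast
    have fS: "finite S" "finite T" using S T finV finite_subset by auto
    have "card (S \<union> T) \<le> card Vsink" using S T finV by (intro card_mono) auto
    moreover have "card (S \<union> T) + card (S \<inter> T) = card S + card T" using fS card_Un_Int by metis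
    ultimately have "card (S \<inter> T) > f" using S T m2 by linarith
    moreover have "card (S \<inter> T) \<le> card (Q \<inter> Q')"
      using S T H fin unfolding is_quorum_def by (intro card_mono) (auto intro: finite_subset)
    ultimately show "card (Q \<inter> Q') > f" by linarith
  qed simp
  have Wq: "is_quorum Pi Sl W"
    unfolding is_quorum_def
  proof (intro conjI ballI)
    show "W \<subseteq> Pi" by fact
    fix i assume i: "i \<in> W"
    show "\<exists>S\<in>Sl i. S \<subseteq> W"
    proof (cases "i \<in> Vsink")
      case True
      obtain S where "S \<subseteq> Vsink \<inter> W" "card S = m" using m_le by (meson obtain_subset_with_card_n)
      then show ?thesis using Sl_in[OF i True] by auto
    next
      case False
      obtain S where "S \<subseteq> snd (sd i) \<inter> Vsink \<inter> W" "card S = f + 1"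
        using Sl_out(3)[OF i False] by (meson obtain_subset_with_card_n)
      then show ?thesis using Sl_out(1)[OF i False] by auto
    qed
  qed
  have cc: "consensus_cluster Pi Sl W f W"
    unfolding consensus_cluster_def using inter Wq by blast
  have sub: "I \<subseteq> W" if "consensus_cluster Pi Sl W f I" for I
    using that unfolding consensus_cluster_def intertwined_def by blast
  show ?thesis
  proof (intro conjI allI iffI)
    show "consensus_cluster Pi Sl W f W" by fact
  next
    fix I assume "maximal_consensus_cluster Pi Sl W f I"
    then show "I = W" using cc sub unfolding maximal_consensus_cluster_def by blast
  next
    fix I assume "I = W"
    then show "maximal_consensus_cluster Pi Sl W f I"
      using cc sub unfolding maximal_consensus_cluster_def by blast
  qed
qed

end
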